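(* In a game with incomplete information as described in the context, let $f$ be a pure strategy profile ($f_i$ $\mathcal T_i$-measurable for each $i$) and $g$ a mixed strategy profile with each $g_i:T_i\to\mathcal M(A_i)$ being $\mathcal F_i$-measurable. If $f$ and $g$ are universally distribution equivalent, then $f$ is belief consistent with $g$, i.e. for every $i\in I$, $f_i(t_i)\in\operatorname{supp} g_i(t_i)$ for $\lambda_i$-almost all $t_i\in T_i$.
   Context: Players $I=\{1,\dots,n\}$; each $A_i$ is a compact metric space with Borel $\sigma$-algebra $\mathcal B(A_i)$; each $(T_i,\mathcal T_i,\lambda_i)$ is an atomless probability space with $\lambda_i$ complete and countably additive; $\mathcal F_i\subseteq\mathcal T_i$ is a countably generated sub-$\sigma$-algebra. $\mathcal M(A_i)$ denotes the space of Borel probability measures on $A_i$ with the topology of weak convergence, and $\operatorname{supp}\mu$ the support of $\mu\in\mathcal M(A_i)$. A mixed strategy of $i$ is a measurable map $g_i:T_i\to\mathcal M(A_i)$ (write $g_i(t_i,\cdot)$ for the measure); a pure strategy is a measurable map $f_i:T_i\to A_i$, identified with $t_i\mapsto\delta_{f_i(t_i)}$. Strategy profiles $f,g$ are universally distribution equivalent if for every $i\in I$ and every $E\in\mathcal F_i$, $\int_E f_i(t_i,\cdot)\,\mathrm d\lambda_i(t_i)=\int_E g_i(t_i,\cdot)\,\mathrm d\lambda_i(t_i)$ as measures on $A_i$; for a pure $f_i$ this means $\lambda_i(E\cap f_i^{-1}(B))=\int_E g_i(t_i,B)\,\mathrm d\lambda_i(t_i)$ for all Borel $B\subseteq A_i$.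 *)

theory Defs
  imports "HOL-Probability.Probability"
begin

definition borel_on :: "'a::metric_space set \<Rightarrow> 'a measure" where
  "borel_on A = restrict_space borel A"

definition supp :: "'a::metric_space set \<Rightarrow> 'a measure \<Rightarrow> 'a set" where
  "supp A \<mu> = {x \<in> A. \<forall>U. open U \<longrightarrow> x \<in> U \<longrightarrow> emeasure \<mu> (U \<inter> A) > 0}"

definition atomless :: "'b measure \<Rightarrow> bool" where
  "atomless M \<longleftrightarrow> (\<forall>E\<in>sets M. emeasure M E > 0 \<longrightarrow>
      (\<exists>E'\<in>sets M. E' \<subseteq> E \<and> 0 < emeasure M E' \<and> emeasure M E' < emeasure M E))"

definition sub_sigma_algebra :: "'b measure \<Rightarrow> 'b measure \<Rightarrow> bool" where
  "sub_sigma_algebra F M \<longleftrightarrow> space F = space M \<and> sets F \<subseteq> sets M"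

definition countably_generated :: "'b measure \<Rightarrow> bool" where
  "countably_generated F \<longleftrightarrow>
     (\<exists>C. countable C \<and> C \<subseteq> Pow (space F) \<and> sets F = sigma_sets (space F) C)"

definition pure_as_mixed :: "'a::metric_space set \<Rightarrow> ('b \<Rightarrow> 'a) \<Rightarrow> 'b \<Rightarrow> 'a measure" where
  "pure_as_mixed A f = (\<lambda>t. return (borel_on A) (f t))"

definition univ_dist_equiv ::
  "nat set \<Rightarrow> (nat \<Rightarrow> 'a::metric_space set) \<Rightarrow> (nat \<Rightarrow> 'b measure) \<Rightarrow> (nat \<Rightarrow> 'b measure)
   \<Rightarrow> (nat \<Rightarrow> 'b \<Rightarrow> 'a measure) \<Rightarrow> (nat \<Rightarrow> 'b \<Rightarrow> 'a measure) \<Rightarrow> bool" where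
  "univ_dist_equiv I A lam F f g \<longleftrightarrow>
     (\<forall>i\<in>I. \<forall>E\<in>sets (F i). \<forall>B\<in>sets (borel_on (A i)).
        (\<integral>\<^sup>+ t\<in>E. emeasure (f i t) B \<partial>lam i) = (\<integral>\<^sup>+ t\<in>E. emeasure (g i t) B \<partial>lam i))"

end

theory Submission
  imports Defs
begin

lemma one_player:
  fixes A :: "'a::metric_space set" and lam F :: "'b measure"
    and f :: "'b \<Rightarrow> 'a" and g :: "'b \<Rightarrow> 'a measure"
  assumes cA: "compact A"
    and Fsub: "sub_sigma_algebra F lam"
    and fm: "f \<in> lam \<rightarrow>\<^sub>M borel_on A"
    and gm: "g \<in> F \<rightarrow>\<^sub>M prob_algebra (borel_on A)"
    and eq: "\<And>E B. E \<in> sets F \<Longrightarrow> B \<in> sets (borel_on A) \<Longrightarrow>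
        (\<integral>\<^sup>+ t\<in>E. emeasure (return (borel_on A) (f t)) B \<partial>lam) = (\<integral>\<^sup>+ t\<in>E. emeasure (g t) B \<partial>lam)"
  shows "AE t in lam. f t \<in> supp A (g t)"
proof -
  have spF: "space F = space lam" and sF: "sets F \<subseteq> sets lam"
    using Fsub by (auto simp: sub_sigma_algebra_def)
  have spB: "space (borel_on A) = A" by (simp add: borel_on_def space_restrict_space)
  have setsB: "S \<inter> A \<in> sets (borel_on A)" if "open S" for S
    using that by (auto simp: borel_on_def sets_restrict_space)
  have fA: "f t \<in> A" if "t \<in> space lam" for t
    using measurable_space[OF fm that] spB by simp
  have gsets: "sets (g t) = sets (borel_on A)" if "t \<in> space lam" for t
    using measurable_space[OF gm] that spF by (auto simp: space_prob_algebra)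
  have tb: "\<forall>e>0. \<exists>k. finite k \<and> k \<subseteq> A \<and> A \<subseteq> (\<Union>x\<in>k. ball x e)"
    by (rule seq_compact_imp_totally_bounded[OF compact_imp_seq_compact[OF cA]])
  obtain K where K: "\<And>m. finite (K m) \<and> K m \<subseteq> A \<and> A \<subseteq> (\<Union>x\<in>K m. ball x (1 / (Suc m)))"
  proof -
    have "\<forall>m::nat. \<exists>k. finite k \<and> k \<subseteq> A \<and> A \<subseteq> (\<Union>x\<in>k. ball x (1 / (Suc m)))"
      using tb by simp
    then show ?thesis using that by metis
  qed
  define C where "C = (\<Union>m. (\<lambda>c. (c, m)) ` K m)"
  have cC: "countable C" unfolding C_def using K by (intro countable_UN) (auto intro!: countable_finite)
  define Bs where "Bs = (\<lambda>(c::'a, m::nat). ball c (1 / Suc m) \<inter> A)"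
  define N where "N = (\<lambda>p. {t \<in> space lam. emeasure (g t) (Bs p) = 0 \<and> f t \<in> Bs p})"
  have BsB: "Bs p \<in> sets (borel_on A)" for p
    by (cases p) (auto simp: Bs_def intro: setsB)
  have null: "N p \<in> null_sets lam" for p
  proof -
    define E where "E = {t \<in> space F. emeasure (g t) (Bs p) = 0}"
    have "(\<lambda>t. emeasure (g t) (Bs p)) \<in> borel_measurable F"
      using measurable_compose[OF measurable_prob_algebraD[OF gm] measurable_emeasure_subprob_algebra[OF BsB]]
      by simp
    then have EF: "E \<in> sets F" unfolding E_def by measurable
    then have El: "E \<in> sets lam" using sF by auto
    have Bl: "{t \<in> space lam. f t \<in> Bs p} \<in> sets lam"
      using measurable_sets[OF fm BsB] by (simp add: vimage_def Int_def conj_commute)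
    have Neq: "N p = E \<inter> {t \<in> space lam. f t \<in> Bs p}"
      unfolding N_def E_def spF by auto
    have NS: "N p \<in> sets lam" using Neq El Bl by auto
    have "emeasure lam (N p) = (\<integral>\<^sup>+ t. indicator (N p) t \<partial>lam)"
      using NS by simp
    also have "\<dots> = (\<integral>\<^sup>+ t\<in>E. emeasure (return (borel_on A) (f t)) (Bs p) \<partial>lam)"
      by (rule nn_integral_cong) (auto simp: BsB Neq indicator_def)
    also have "\<dots> = (\<integral>\<^sup>+ t\<in>E. emeasure (g t) (Bs p) \<partial>lam)"
      by (rule eq[OF EF BsB])
    also have "\<dots> = (\<integral>\<^sup>+ t. 0 \<partial>lam)"
      by (rule nn_integral_cong) (auto simp: E_def indicator_def)
    finally show ?thesis using NS by auto
  qed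
  have "AE t in lam. \<forall>p\<in>C. t \<notin> N p"
    using cC null by (subst AE_ball_countable) (auto intro: AE_not_in)
  then show ?thesis
  proof (elim AE_mp, intro AE_I2 impI)
    fix t assume t: "t \<in> space lam" and nN: "\<forall>p\<in>C. t \<notin> N p"
    show "f t \<in> supp A (g t)"
      unfolding supp_def
    proof (safe)
      show "f t \<in> A" using fA[OF t] .
    next
      fix U assume U: "open U" "f t \<in> U"
      show "0 < emeasure (g t) (U \<inter> A)"
      proof (rule ccontr)
        assume "\<not> 0 < emeasure (g t) (U \<inter> A)"
        then have z: "emeasure (g t) (U \<inter> A) = 0" by (simp add: not_gr_zero)
        obtain e where e: "e > 0" "ball (f t) e \<subseteq> U"
          using U open_contains_ball by blast
        obtain m :: nat where m: "1 / Suc m < e / 2"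
          using e by (metis divide_inverse half_gt_zero mult_1 reals_Archimedean)
        obtain c where c: "c \<in> K m" "f t \<in> ball c (1 / Suc m)"
          using K[of m] fA[OF t] by blast
        have sub: "ball c (1 / Suc m) \<subseteq> ball (f t) e"
        proof
          fix y assume "y \<in> ball c (1 / Suc m)"
          then have "dist c y < 1 / Suc m" by simp
          moreover have "dist c (f t) < 1 / Suc m" using c by simp
          ultimately have "dist (f t) y < e"
            using m dist_triangle[of "f t" y c] by (simp add: dist_commute)
          then show "y \<in> ball (f t) e" by simp
        qed
        have pC: "(c, m) \<in> C" unfolding C_def using c by auto
        have "emeasure (g t) (Bs (c, m)) \<le> emeasure (g t) (U \<inter> A)"
        proof (rule emeasure_mono)
          show "Bs (c, m) \<subseteq> U \<inter> A" using sub e by (auto simp: Bs_def)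
          show "U \<inter> A \<in> sets (g t)" unfolding gsets[OF t] by (rule setsB[OF U(1)])
        qed
        then have "emeasure (g t) (Bs (c, m)) = 0" using z by simp
        moreover have "f t \<in> Bs (c, m)" using c fA[OF t] by (simp add: Bs_def)
        ultimately have "t \<in> N (c, m)" using t by (simp add: N_def)
        then show False using nN pC by blast
      qed
    qed
  qed
qed

theorem proposition3:
  fixes n :: nat
    and A :: "nat \<Rightarrow> 'a::metric_space set"
    and lam :: "nat \<Rightarrow> 'b measure"
    and F :: "nat \<Rightarrow> 'b measure"
    and f :: "nat \<Rightarrow> 'b \<Rightarrow> 'a"
    and g :: "nat \<Rightarrow> 'b \<Rightarrow> 'a measure"
  assumes A_compact: "\<And>i. i \<in> {1..n} \<Longrightarrow> compact (A i)"
    and lam_prob: "\<And>i. i \<in> {1..n} \<Longrightarrow> prob_space (lam i)"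
    and lam_complete: "\<And>i. i \<in> {1..n} \<Longrightarrow> complete_measure (lam i)"
    and lam_atomless: "\<And>i. i \<in> {1..n} \<Longrightarrow> atomless (lam i)"
    and F_sub: "\<And>i. i \<in> {1..n} \<Longrightarrow> sub_sigma_algebra (F i) (lam i)"
    and F_cg: "\<And>i. i \<in> {1..n} \<Longrightarrow> countably_generated (F i)"
    and f_meas: "\<And>i. i \<in> {1..n} \<Longrightarrow> f i \<in> lam i \<rightarrow>\<^sub>M borel_on (A i)"
    and g_meas: "\<And>i. i \<in> {1..n} \<Longrightarrow> g i \<in> F i \<rightarrow>\<^sub>M prob_algebra (borel_on (A i))"
    and ude: "univ_dist_equiv {1..n} A lam F (\<lambda>i. pure_as_mixed (A i) (f i)) g"
  shows "\<forall>i\<in>{1..n}. AE t in lam i. f i t \<in> supp (A i) (g i t)"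
proof
  fix i assume i: "i \<in> {1..n}"
  show "AE t in lam i. f i t \<in> supp (A i) (g i t)"
    by (rule one_player[OF A_compact[OF i] F_sub[OF i] f_meas[OF i] g_meas[OF i]])
       (use ude i in \<open>unfold univ_dist_equiv_def pure_as_mixed_def, blast\<close>)
qed

end
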